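(* For every positive integer $n$, $N'(n,n-1,1)=n$.
   Context: $\mathbb{Z}_4$ is the ring of integers modulo $4$; a $\mathbb{Z}_4$-code of length $n$ is a $\mathbb{Z}_4$-submodule of $\mathbb{Z}_4^n$. Two codes are equivalent if one is obtained from the other by permuting coordinates and changing the signs of some coordinates. Every $\mathbb{Z}_4$-code is permutation-equivalent to one with generator matrix $\begin{pmatrix} I_{k_1} & A & B \\ O & 2I_{k_2} & 2D\end{pmatrix}$ with $A,D$ $(0,1)$-matrices and $B$ a $\mathbb{Z}_4$-matrix; the code then has type $4^{k_1}2^{k_2}$. The trivial extension of a code $C$ of length $n-1$ is $\{(c,0)\mid c\in C\}$ (the only code of length $0$ is the zero code). $N'(n,k_1,k_2)$ denotes the number of equivalence classes of $\mathbb{Z}_4$-codes of length $n$ and type $4^{k_1}2^{k_2}$ that are not equivalent to the trivial extension of any $\mathbb{Z}_4$-code of length $n-1$. *)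

theory Defs
  imports "HOL-Combinatorics.Permutations"
begin

text \<open>Words of length n over Z4: functions nat => int with values in {0..3} on
  coordinates 0..n-1 and 0 beyond.\<close>
definition zvec :: "nat \<Rightarrow> (nat \<Rightarrow> int) set" where
  "zvec n = {v. (\<forall>i<n. 0 \<le> v i \<and> v i < 4) \<and> (\<forall>i\<ge>n. v i = 0)}"

definition zadd :: "(nat \<Rightarrow> int) \<Rightarrow> (nat \<Rightarrow> int) \<Rightarrow> nat \<Rightarrow> int" where
  "zadd x y = (\<lambda>i. (x i + y i) mod 4)"

definition zsmul :: "int \<Rightarrow> (nat \<Rightarrow> int) \<Rightarrow> nat \<Rightarrow> int" where
  "zsmul a x = (\<lambda>i. (a * x i) mod 4)"

definition z4code :: "nat \<Rightarrow> (nat \<Rightarrow> int) set \<Rightarrow> bool" where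
  "z4code n C \<longleftrightarrow> C \<subseteq> zvec n \<and> (\<lambda>_. 0) \<in> C \<and>
     (\<forall>x\<in>C. \<forall>y\<in>C. zadd x y \<in> C) \<and> (\<forall>a. \<forall>x\<in>C. zsmul a x \<in> C)"

definition z4equiv :: "nat \<Rightarrow> (nat \<Rightarrow> int) set \<Rightarrow> (nat \<Rightarrow> int) set \<Rightarrow> bool" where
  "z4equiv n C C' \<longleftrightarrow> (\<exists>\<sigma> \<epsilon>. \<sigma> permutes {..<n} \<and> (\<forall>i. \<epsilon> i = 1 \<or> \<epsilon> i = -1) \<and>
     C' = (\<lambda>c. \<lambda>i. (\<epsilon> i * c (\<sigma> i)) mod 4) ` C)"

text \<open>Standard form generator matrix ( I_k1 A B ; O 2I_k2 2D ) with n columns: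
  rows r 0..k1-1 and s 0..k2-1 (entries in Z4 represented in 0..3).\<close>
definition std_form :: "nat \<Rightarrow> nat \<Rightarrow> nat \<Rightarrow> (nat \<Rightarrow> nat \<Rightarrow> int) \<Rightarrow> (nat \<Rightarrow> nat \<Rightarrow> int) \<Rightarrow> bool" where
  "std_form n k1 k2 r s \<longleftrightarrow> k1 + k2 \<le> n \<and>
     (\<forall>i<k1. (\<forall>j<k1. r i j = (if i = j then 1 else 0)) \<and>
             (\<forall>j. k1 \<le> j \<and> j < k1 + k2 \<longrightarrow> r i j \<in> {0, 1}) \<and>
             (\<forall>j. k1 + k2 \<le> j \<and> j < n \<longrightarrow> r i j \<in> {0, 1, 2, 3}) \<and>
             (\<forall>j\<ge>n. r i j = 0)) \<and>
     (\<forall>i<k2. (\<forall>j<k1. s i j = 0) \<and>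
             (\<forall>j. k1 \<le> j \<and> j < k1 + k2 \<longrightarrow> s i j = (if j = k1 + i then 2 else 0)) \<and>
             (\<forall>j. k1 + k2 \<le> j \<and> j < n \<longrightarrow> s i j \<in> {0, 2}) \<and>
             (\<forall>j\<ge>n. s i j = 0))"

definition gen_code :: "nat \<Rightarrow> nat \<Rightarrow> (nat \<Rightarrow> nat \<Rightarrow> int) \<Rightarrow> (nat \<Rightarrow> nat \<Rightarrow> int) \<Rightarrow> (nat \<Rightarrow> int) set" where
  "gen_code k1 k2 r s = {(\<lambda>j. ((\<Sum>i<k1. a i * r i j) + (\<Sum>i<k2. b i * s i j)) mod 4) | a b. True}"

definition has_type :: "nat \<Rightarrow> nat \<Rightarrow> nat \<Rightarrow> (nat \<Rightarrow> int) set \<Rightarrow> bool" where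
  "has_type n k1 k2 C \<longleftrightarrow> (\<exists>\<sigma> r s. \<sigma> permutes {..<n} \<and> std_form n k1 k2 r s \<and>
     (\<lambda>c. c \<circ> \<sigma>) ` C = gen_code k1 k2 r s)"

definition triv_ext :: "nat \<Rightarrow> (nat \<Rightarrow> int) set \<Rightarrow> (nat \<Rightarrow> int) set" where
  "triv_ext m D = (\<lambda>c. \<lambda>i. if i < m then c i else 0) ` D"

definition Nprime :: "nat \<Rightarrow> nat \<Rightarrow> nat \<Rightarrow> nat" where
  "Nprime n k1 k2 = card {{C'. z4code n C' \<and> z4equiv n C C'} | C.
      z4code n C \<and> has_type n k1 k2 C \<and>
      \<not> (\<exists>D. z4code (n - 1) D \<and> z4equiv n C (triv_ext (n - 1) D))}"

end

theory Submission
  imports Defs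
begin


definition tm :: "(nat \<Rightarrow> nat) \<Rightarrow> (nat \<Rightarrow> int) \<Rightarrow> (nat \<Rightarrow> int) \<Rightarrow> nat \<Rightarrow> int" where
  "tm \<sigma> \<epsilon> c = (\<lambda>i. (\<epsilon> i * c (\<sigma> i)) mod 4)"

lemma z4equiv_tm: "z4equiv n C C' \<longleftrightarrow> (\<exists>\<sigma> \<epsilon>. \<sigma> permutes {..<n} \<and> (\<forall>i. \<epsilon> i = 1 \<or> \<epsilon> i = -1) \<and> C' = tm \<sigma> \<epsilon> ` C)"
  unfolding z4equiv_def tm_def by simp

lemma tm_comp: "tm \<tau> \<delta> (tm \<sigma> \<epsilon> c) = tm (\<sigma> \<circ> \<tau>) (\<lambda>i. \<delta> i * \<epsilon> (\<tau> i)) c"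
  unfolding tm_def by (auto simp: mod_mult_right_eq mult.assoc)

lemma zvec_mod: "c \<in> zvec n \<Longrightarrow> c i mod 4 = c i"
  unfolding zvec_def by (cases "i < n") auto

lemma tm_id: "c \<in> zvec n \<Longrightarrow> tm id (\<lambda>_. 1) c = c"
  unfolding tm_def by (auto simp: zvec_mod)

lemma tm_zvec: assumes "c \<in> zvec n" "\<sigma> permutes {..<n}" shows "tm \<sigma> \<epsilon> c \<in> zvec n"
proof -
  have "\<sigma> i = i" if "i \<ge> n" for i using assms(2) that by (simp add: permutes_def)
  then show ?thesis using assms(1) unfolding zvec_def tm_def by auto
qed

lemma equiv_zvec: "X \<subseteq> zvec n \<Longrightarrow> z4equiv n X Y \<Longrightarrow> Y \<subseteq> zvec n"
  unfolding z4equiv_tm using tm_zvec by blast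

lemma equiv_refl: "X \<subseteq> zvec n \<Longrightarrow> z4equiv n X X"
  unfolding z4equiv_tm
  apply (rule exI[of _ id], rule exI[of _ "\<lambda>_. 1"])
  using tm_id by (force simp: permutes_id)

lemma equiv_trans: assumes "z4equiv n X Y" "z4equiv n Y Z" shows "z4equiv n X Z"
proof -
  obtain \<sigma> \<epsilon> where 1: "\<sigma> permutes {..<n}" "\<forall>i. \<epsilon> i = 1 \<or> \<epsilon> i = -1" "Y = tm \<sigma> \<epsilon> ` X"
    using assms(1) unfolding z4equiv_tm by blast
  obtain \<tau> \<delta> where 2: "\<tau> permutes {..<n}" "\<forall>i. \<delta> i = 1 \<or> \<delta> i = -1" "Z = tm \<tau> \<delta> ` Y"
    using assms(2) unfolding z4equiv_tm by blast
  have "Z = tm (\<sigma> \<circ> \<tau>) (\<lambda>i. \<delta> i * \<epsilon> (\<tau> i)) ` X"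
    using 1(3) 2(3) by (auto simp: image_image tm_comp)
  moreover have "\<sigma> \<circ> \<tau> permutes {..<n}" using 1(1) 2(1) by (simp add: permutes_compose)
  moreover have "\<forall>i. \<delta> i * \<epsilon> (\<tau> i) = 1 \<or> \<delta> i * \<epsilon> (\<tau> i) = -1"
  proof
    fix i
    show "\<delta> i * \<epsilon> (\<tau> i) = 1 \<or> \<delta> i * \<epsilon> (\<tau> i) = -1"
      using 1(2)[rule_format, of "\<tau> i"] 2(2)[rule_format, of i] by auto
  qed
  ultimately show ?thesis unfolding z4equiv_tm
    by (intro exI[of _ "\<sigma> \<circ> \<tau>"] exI[of _ "\<lambda>i. \<delta> i * \<epsilon> (\<tau> i)"] conjI)
qed

lemma equiv_sym: assumes "X \<subseteq> zvec n" "z4equiv n X Y" shows "z4equiv n Y X"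
proof -
  obtain \<sigma> \<epsilon> where 1: "\<sigma> permutes {..<n}" "\<forall>i. \<epsilon> i = 1 \<or> \<epsilon> i = -1" "Y = tm \<sigma> \<epsilon> ` X"
    using assms(2) unfolding z4equiv_tm by blast
  let ?\<tau> = "inv \<sigma>" let ?\<delta> = "\<lambda>i. \<epsilon> (inv \<sigma> i)"
  have "tm ?\<tau> ?\<delta> (tm \<sigma> \<epsilon> c) = c" if "c \<in> X" for c
  proof -
    have "\<sigma> \<circ> inv \<sigma> = id" using 1(1) permutes_inverses(1) by fastforce
    moreover have "?\<delta> i * \<epsilon> (?\<tau> i) = 1" for i
      using 1(2)[rule_format, of "inv \<sigma> i"] by auto
    moreover have "c \<in> zvec n" using that assms(1) by blast
    ultimately show ?thesis unfolding tm_comp by (simp add: tm_id)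
  qed
  then have "tm ?\<tau> ?\<delta> ` Y = X" unfolding 1(3) image_image by simp
  then have "X = tm ?\<tau> ?\<delta> ` Y" by simp
  moreover have "?\<tau> permutes {..<n}" using 1(1) by (simp add: permutes_inv)
  moreover have "\<forall>i. ?\<delta> i = 1 \<or> ?\<delta> i = -1" using 1(2) by simp
  ultimately show ?thesis unfolding z4equiv_tm
    by (intro exI[of _ ?\<tau>] exI[of _ ?\<delta>] conjI)
qed

definition cls :: "nat \<Rightarrow> (nat \<Rightarrow> int) set \<Rightarrow> (nat \<Rightarrow> int) set set" where
  "cls n C = {C'. z4code n C' \<and> z4equiv n C C'}"

lemma cls_eq: "X \<subseteq> zvec n \<Longrightarrow> z4equiv n X Y \<Longrightarrow> cls n X = cls n Y"
proof -
  assume a: "X \<subseteq> zvec n" "z4equiv n X Y"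
  have "z4equiv n Y X" using equiv_sym a by blast
  then show ?thesis unfolding cls_def using a(2) equiv_trans by blast
qed



definition gfun :: "nat \<Rightarrow> nat \<Rightarrow> (nat \<Rightarrow> nat \<Rightarrow> int) \<Rightarrow> (nat \<Rightarrow> nat \<Rightarrow> int) \<Rightarrow> (nat \<Rightarrow> int) \<Rightarrow> (nat \<Rightarrow> int) \<Rightarrow> nat \<Rightarrow> int" where
  "gfun k1 k2 r s a b = (\<lambda>j. ((\<Sum>i<k1. a i * r i j) + (\<Sum>i<k2. b i * s i j)) mod 4)"

lemma gen_mem: "c \<in> gen_code k1 k2 r s \<longleftrightarrow> (\<exists>a b. c = gfun k1 k2 r s a b)"
  unfolding gen_code_def gfun_def by auto

lemma sf_r_out: "std_form n k1 k2 r s \<Longrightarrow> i < k1 \<Longrightarrow> n \<le> j \<Longrightarrow> r i j = 0"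
  unfolding std_form_def by blast
lemma sf_s_out: "std_form n k1 k2 r s \<Longrightarrow> i < k2 \<Longrightarrow> n \<le> j \<Longrightarrow> s i j = 0"
  unfolding std_form_def by blast

lemma gfun_add: "zadd (gfun k1 k2 r s a b) (gfun k1 k2 r s a' b') = gfun k1 k2 r s (\<lambda>i. a i + a' i) (\<lambda>i. b i + b' i)"
proof -
  have "(\<Sum>i<k1. (a i + a' i) * r i j) = (\<Sum>i<k1. a i * r i j) + (\<Sum>i<k1. a' i * r i j)" for j
    by (simp add: distrib_right sum.distrib)
  moreover have "(\<Sum>i<k2. (b i + b' i) * s i j) = (\<Sum>i<k2. b i * s i j) + (\<Sum>i<k2. b' i * s i j)" for j
    by (simp add: distrib_right sum.distrib)
  ultimately show ?thesis unfolding zadd_def gfun_def fun_eq_iff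
    by (simp add: mod_add_eq ac_simps)
qed

lemma gfun_smul: "zsmul k (gfun k1 k2 r s a b) = gfun k1 k2 r s (\<lambda>i. k * a i) (\<lambda>i. k * b i)"
proof -
  have "(\<Sum>i<k1. (k * a i) * r i j) = k * (\<Sum>i<k1. a i * r i j)" for j
    by (simp add: sum_distrib_left mult.assoc)
  moreover have "(\<Sum>i<k2. (k * b i) * s i j) = k * (\<Sum>i<k2. b i * s i j)" for j
    by (simp add: sum_distrib_left mult.assoc)
  ultimately show ?thesis unfolding zsmul_def gfun_def fun_eq_iff
    by (simp add: mod_mult_right_eq distrib_left)
qed

lemma gen_code_z4code:
  assumes "std_form n k1 k2 r s" shows "z4code n (gen_code k1 k2 r s)"
proof -
  let ?f = "gfun k1 k2 r s"
  have sub: "?f a b \<in> zvec n" for a b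
  proof -
    have "?f a b j = 0" if "j \<ge> n" for j
      using sf_r_out[OF assms _ that] sf_s_out[OF assms _ that] unfolding gfun_def by simp
    then show ?thesis unfolding zvec_def gfun_def by auto
  qed
  have zero: "(\<lambda>_. 0::int) = ?f (\<lambda>_. 0) (\<lambda>_. 0)" by (simp add: gfun_def)
  have "gen_code k1 k2 r s \<subseteq> zvec n"
  proof
    fix c assume "c \<in> gen_code k1 k2 r s"
    then obtain a b where "c = ?f a b" unfolding gen_mem by blast
    then show "c \<in> zvec n" using sub by simp
  qed
  moreover have "(\<lambda>_. 0::int) \<in> gen_code k1 k2 r s" unfolding gen_mem using zero by blast
  moreover have "\<forall>x\<in>gen_code k1 k2 r s. \<forall>y\<in>gen_code k1 k2 r s. zadd x y \<in> gen_code k1 k2 r s"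
  proof (intro ballI)
    fix x y assume "x \<in> gen_code k1 k2 r s" "y \<in> gen_code k1 k2 r s"
    then obtain a b a' b' where "x = ?f a b" "y = ?f a' b'" unfolding gen_mem by blast
    then show "zadd x y \<in> gen_code k1 k2 r s" unfolding gen_mem using gfun_add[of k1 k2 r s a b a' b'] by blast
  qed
  moreover have "\<forall>k. \<forall>x\<in>gen_code k1 k2 r s. zsmul k x \<in> gen_code k1 k2 r s"
  proof (intro allI ballI)
    fix k x assume "x \<in> gen_code k1 k2 r s"
    then obtain a b where "x = ?f a b" unfolding gen_mem by blast
    then show "zsmul k x \<in> gen_code k1 k2 r s" unfolding gen_mem using gfun_smul[of k k1 k2 r s a b] by blast
  qed
  ultimately show ?thesis unfolding z4code_def by blast
qed



definition GS :: "nat \<Rightarrow> nat set \<Rightarrow> (nat \<Rightarrow> int) set" where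
  "GS m S = {c \<in> zvec (Suc m). (c m + (\<Sum>i\<in>S. c i)) mod 2 = 0}"

definition S0 :: "nat \<Rightarrow> (nat \<Rightarrow> nat \<Rightarrow> int) \<Rightarrow> nat set" where
  "S0 m r = {i. i < m \<and> r i m = 1}"

lemma std_entry:
  assumes "std_form (Suc m) m 1 r s"
  shows "(\<Sum>i<m. a i * r i j) + (\<Sum>i<1. b i * s i j) =
    (if j < m then a j else if j = m then (\<Sum>i\<in>S0 m r. a i) + 2 * b 0 else 0)"
proof (cases "j < m")
  case True
  have "(\<Sum>i<m. a i * r i j) = (\<Sum>i<m. if i = j then a i else 0)"
    using assms True unfolding std_form_def by (intro sum.cong) auto
  also have "\<dots> = a j" using True by (simp add: sum.delta')
  finally show ?thesis using assms True unfolding std_form_def by simp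
next
  case False
  show ?thesis
  proof (cases "j = m")
    case True
    have "(\<Sum>i<m. a i * r i j) = (\<Sum>i<m. if r i m = 1 then a i else 0)"
      using assms True unfolding std_form_def by (intro sum.cong) auto
    also have "\<dots> = (\<Sum>i\<in>S0 m r. a i)"
      unfolding S0_def by (simp add: sum.inter_filter[symmetric] Collect_conj_eq lessThan_def Int_commute)
    finally show ?thesis using assms True unfolding std_form_def by simp
  next
    case F2: False
    then have "j \<ge> Suc m" using False by simp
    then show ?thesis using assms False F2 unfolding std_form_def by simp
  qed
qed

lemma S0_sub: "S0 m r \<subseteq> {..<m}" unfolding S0_def by auto

lemma gen_code_GS:
  assumes "std_form (Suc m) m 1 r s"
  shows "gen_code m 1 r s = GS m (S0 m r)"
proof -
  let ?S = "S0 m r"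
  let ?f = "gfun m 1 r s"
  note mem = gen_mem[of _ m 1 r s]
  have f: "?f a b = (\<lambda>j. (if j < m then a j else if j = m then (\<Sum>i\<in>?S. a i) + 2 * b 0 else 0) mod 4)" for a b
    unfolding gfun_def by (rule ext) (simp only: std_entry[OF assms])
  have fin: "finite ?S" using S0_sub finite_subset by blast
  show ?thesis
  proof (intro set_eqI iffI)
    fix c assume "c \<in> gen_code m 1 r s"
    then obtain a b where c: "c = ?f a b" using mem by blast
    have cf: "c = (\<lambda>j. (if j < m then a j else if j = m then (\<Sum>i\<in>?S. a i) + 2 * b 0 else 0) mod 4)"
      using c f by simp
    have cz: "c \<in> zvec (Suc m)" unfolding zvec_def cf by auto
    have ci: "c i = a i mod 4" if "i \<in> ?S" for i
    proof -
      have "i < m" using that S0_sub by blast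
      then show ?thesis unfolding cf by simp
    qed
    have cm: "c m = ((\<Sum>i\<in>?S. a i) + 2 * b 0) mod 4" unfolding cf by simp
    have cs: "(\<Sum>i\<in>?S. c i) = (\<Sum>i\<in>?S. a i mod 4)" using ci by (rule sum.cong[OF refl])
    have "(c m + (\<Sum>i\<in>?S. c i)) mod 2 = (((\<Sum>i\<in>?S. a i) + 2 * b 0) mod 4 + (\<Sum>i\<in>?S. a i mod 4)) mod 2"
      unfolding cm cs ..
    also have "\<dots> = (((\<Sum>i\<in>?S. a i) + 2 * b 0) + (\<Sum>i\<in>?S. a i)) mod 2"
    proof -
      have h1: "(\<Sum>i\<in>?S. a i mod 4) mod 2 = (\<Sum>i\<in>?S. a i) mod 2"
      proof -
        have "(\<Sum>i\<in>?S. a i mod 4) mod 2 = (\<Sum>i\<in>?S. a i mod 4 mod 2) mod 2" by (simp only: mod_sum_eq)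
        also have "\<dots> = (\<Sum>i\<in>?S. a i mod 2) mod 2" by (simp add: mod_mod_cancel)
        also have "\<dots> = (\<Sum>i\<in>?S. a i) mod 2" by (simp only: mod_sum_eq)
        finally show ?thesis .
      qed
      have h2: "((\<Sum>i\<in>?S. a i) + 2 * b 0) mod 4 mod 2 = ((\<Sum>i\<in>?S. a i) + 2 * b 0) mod 2"
        by (simp add: mod_mod_cancel)
      show ?thesis by (metis h1 h2 mod_add_eq)
    qed
    also have "\<dots> = (2 * ((\<Sum>i\<in>?S. a i) + b 0)) mod 2" by (simp add: algebra_simps)
    also have "\<dots> = 0" by simp
    finally show "c \<in> GS m ?S" using cz unfolding GS_def by simp
  next
    fix c assume "c \<in> GS m ?S"
    then have cz: "c \<in> zvec (Suc m)" and par: "(c m + (\<Sum>i\<in>?S. c i)) mod 2 = 0" unfolding GS_def by auto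
    define b where "b = (\<lambda>_::nat. (c m - (\<Sum>i\<in>?S. c i)) div 2)"
    have "2 * b 0 = c m - (\<Sum>i\<in>?S. c i)" using par
    proof -
      have "\<forall>x y::int. (x+y) mod 2 = 0 \<longrightarrow> 2*((x-y) div 2) = x - y" by presburger
      then show ?thesis using par by (simp add: b_def)
    qed
    then have "c j = (if j < m then c j else if j = m then (\<Sum>i\<in>?S. c i) + 2 * b 0 else 0) mod 4" for j
    proof -
      assume h: "2 * b 0 = c m - (\<Sum>i\<in>?S. c i)"
      have "c j = c j mod 4" using zvec_mod[OF cz] by simp
      moreover have "c j = 0" if "j > m" using cz that unfolding zvec_def by simp
      ultimately show ?thesis using h by (cases "j < m"; cases "j = m") auto
    qed
    then have "c = ?f c b" unfolding f by (simp add: fun_eq_iff)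
    then show "c \<in> gen_code m 1 r s" using mem by blast
  qed
qed



definition Pinv :: "nat \<Rightarrow> (nat \<Rightarrow> int) set \<Rightarrow> nat set" where
  "Pinv n X = {i. i < n \<and> (\<exists>c\<in>X. odd (c i) \<and> (\<forall>j. j \<noteq> i \<longrightarrow> c j = 0))}"

lemma sign_facts:
  assumes "e = 1 \<or> e = -1" "x mod 4 = (x::int)"
  shows "((e * x) mod 4 = 0 \<longleftrightarrow> x = 0)" "odd ((e * x) mod 4) \<longleftrightarrow> odd x"
proof -
  have m2: "odd (y mod 4) \<longleftrightarrow> odd y" for y :: int
  proof -
    have "(y mod 4) mod 2 = y mod 2" by (simp add: mod_mod_cancel)
    then show ?thesis by (simp add: even_iff_mod_2_eq_zero)
  qed
  have z: "(-x) mod 4 = 0 \<longleftrightarrow> x mod 4 = 0"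
    by (simp add: dvd_eq_mod_eq_0[symmetric])
  show "((e * x) mod 4 = 0 \<longleftrightarrow> x = 0)"
    using assms(1) z assms(2) by (elim disjE) auto
  show "odd ((e * x) mod 4) \<longleftrightarrow> odd x"
    using assms(1) m2[of x] m2[of "-x"] by (elim disjE) auto
qed

lemma Pinv_equiv:
  assumes X: "X \<subseteq> zvec n" and p: "\<sigma> permutes {..<n}" and e: "\<forall>i. \<epsilon> i = 1 \<or> \<epsilon> i = -1"
  shows "card (Pinv n (tm \<sigma> \<epsilon> ` X)) = card (Pinv n X)"
proof -
  have key0: "tm \<sigma> \<epsilon> c j = 0 \<longleftrightarrow> c (\<sigma> j) = 0" if "c \<in> X" for c j
    using sign_facts(1)[OF e[rule_format, of j] zvec_mod[of c n "\<sigma> j"]] that X unfolding tm_def by auto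
  have key1: "odd (tm \<sigma> \<epsilon> c j) \<longleftrightarrow> odd (c (\<sigma> j))" if "c \<in> X" for c j
    using sign_facts(2)[OF e[rule_format, of j] zvec_mod[of c n "\<sigma> j"]] that X unfolding tm_def by auto
  have lt: "\<sigma> i < n \<longleftrightarrow> i < n" for i using p
    by (metis lessThan_iff permutes_in_image)
  have si: "\<sigma> (inv \<sigma> k) = k" "inv \<sigma> (\<sigma> k) = k" for k
    using p permutes_inverses by fastforce+
  have "\<sigma> ` Pinv n (tm \<sigma> \<epsilon> ` X) = Pinv n X"
  proof (intro set_eqI iffI)
    fix k assume "k \<in> \<sigma> ` Pinv n (tm \<sigma> \<epsilon> ` X)"
    then obtain i c where k: "k = \<sigma> i" "i < n" "c \<in> X" "odd (tm \<sigma> \<epsilon> c i)"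
       "\<forall>j. j \<noteq> i \<longrightarrow> tm \<sigma> \<epsilon> c j = 0" unfolding Pinv_def by auto
    have "c l = 0" if "l \<noteq> k" for l
      using k(5)[rule_format, of "inv \<sigma> l"] key0[OF k(3)] that k(1) si by metis
    then show "k \<in> Pinv n X" unfolding Pinv_def using k key1 lt by auto
  next
    fix k assume "k \<in> Pinv n X"
    then obtain c where k: "k < n" "c \<in> X" "odd (c k)" "\<forall>j. j \<noteq> k \<longrightarrow> c j = 0"
      unfolding Pinv_def by auto
    let ?i = "inv \<sigma> k"
    have "tm \<sigma> \<epsilon> c j = 0" if "j \<noteq> ?i" for j
      using key0[OF k(2)] k(4) that si by metis
    moreover have "odd (tm \<sigma> \<epsilon> c ?i)" using key1[OF k(2)] si k(3) by simp
    moreover have "?i < n" using lt si k(1) by metis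
    ultimately have "?i \<in> Pinv n (tm \<sigma> \<epsilon> ` X)" unfolding Pinv_def using k(2) by blast
    then show "k \<in> \<sigma> ` Pinv n (tm \<sigma> \<epsilon> ` X)" using si by (metis image_eqI)
  qed
  moreover have "inj_on \<sigma> (Pinv n (tm \<sigma> \<epsilon> ` X))" using p permutes_inj by (metis inj_on_subset subset_UNIV)
  ultimately show ?thesis by (metis card_image)
qed

lemma Pinv_equiv': "X \<subseteq> zvec n \<Longrightarrow> z4equiv n X Y \<Longrightarrow> card (Pinv n Y) = card (Pinv n X)"
  unfolding z4equiv_tm using Pinv_equiv by blast

lemma sum_single:
  assumes "finite S" "\<forall>j. j \<noteq> i \<longrightarrow> c j = 0"
  shows "(\<Sum>j\<in>S. c j) = (if i \<in> S then c i else (0::int))"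
proof -
  have "(\<Sum>j\<in>S. c j) = (\<Sum>j\<in>S. if j = i then c j else 0)" using assms(2) by (intro sum.cong) auto
  then show ?thesis using assms(1) by (simp add: sum.delta')
qed

lemma Pinv_GS:
  assumes "S \<subseteq> {..<m}"
  shows "Pinv (Suc m) (GS m S) = {..<m} - S"
proof (intro set_eqI iffI)
  have fin: "finite S" using assms finite_subset by blast
  fix i assume "i \<in> Pinv (Suc m) (GS m S)"
  then obtain c where c: "i < Suc m" "c \<in> GS m S" "odd (c i)" "\<forall>j. j \<noteq> i \<longrightarrow> c j = 0"
    unfolding Pinv_def by auto
  have par: "(c m + (\<Sum>j\<in>S. c j)) mod 2 = 0" using c(2) unfolding GS_def by auto
  have sm: "(\<Sum>j\<in>S. c j) = (if i \<in> S then c i else 0)" using sum_single[OF fin c(4)] .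
  show "i \<in> {..<m} - S"
  proof (cases "i = m")
    case True
    then have "m \<notin> S" using assms by auto
    then have "c m mod 2 = 0" using par sm True by simp
    then show ?thesis using c(3) True by (simp add: even_iff_mod_2_eq_zero)
  next
    case False
    then have "i < m" using c(1) by simp
    moreover have "i \<notin> S"
    proof
      assume iS: "i \<in> S"
      have "c m = 0" using c(4) False by simp
      then have "c i mod 2 = 0" using par sm iS by simp
      then show False using c(3) by (simp add: even_iff_mod_2_eq_zero)
    qed
    ultimately show ?thesis by simp
  qed
next
  have fin: "finite S" using assms finite_subset by blast
  fix i assume i: "i \<in> {..<m} - S"
  let ?e = "\<lambda>j. if j = i then 1 else (0::int)"
  have "?e \<in> zvec (Suc m)" using i unfolding zvec_def by auto
  moreover have "(\<Sum>j\<in>S. ?e j) = 0" using sum_single[OF fin, of i ?e] i by simp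
  ultimately have "?e \<in> GS m S" unfolding GS_def using i by auto
  then have inS: "?e \<in> GS m S" .
  have "\<exists>c\<in>GS m S. odd (c i) \<and> (\<forall>j. j \<noteq> i \<longrightarrow> c j = 0)"
    by (rule bexI[OF _ inS]) simp
  moreover have "i < Suc m" using i by simp
  ultimately show "i \<in> Pinv (Suc m) (GS m S)" unfolding Pinv_def by blast
qed

lemma card_Pinv_GS: "S \<subseteq> {..<m} \<Longrightarrow> card (Pinv (Suc m) (GS m S)) = m - card S"
  using Pinv_GS by (simp add: card_Diff_subset finite_subset)

lemma GS_zvec: "GS m S \<subseteq> zvec (Suc m)" unfolding GS_def by auto

lemma GS_nontriv:
  assumes "S \<subseteq> {..<m}" "z4equiv (Suc m) (GS m S) Y"
  shows "Y \<noteq> triv_ext m D"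
proof
  assume Y: "Y = triv_ext m D"
  obtain \<sigma> \<epsilon> where 1: "\<sigma> permutes {..<Suc m}" "\<forall>i. \<epsilon> i = 1 \<or> \<epsilon> i = -1" "Y = tm \<sigma> \<epsilon> ` GS m S"
    using assms(2) unfolding z4equiv_tm by blast
  have fin: "finite S" using assms finite_subset by blast
  let ?k = "\<sigma> m"
  have k: "?k < Suc m" using 1(1) by (metis lessThan_iff lessI permutes_in_image)
  let ?c = "\<lambda>j. if j = ?k then 2 else (0::int)"
  have "?c \<in> zvec (Suc m)" using k unfolding zvec_def by auto
  moreover have "(\<Sum>j\<in>S. ?c j) = (if ?k \<in> S then 2 else 0)" using sum_single[OF fin, of ?k ?c] by simp
  ultimately have "?c \<in> GS m S" unfolding GS_def by auto
  then have "tm \<sigma> \<epsilon> ?c \<in> triv_ext m D" using 1(3) Y by blast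
  moreover have "tm \<sigma> \<epsilon> ?c m = 2" unfolding tm_def using 1(2)[rule_format, of m] by auto
  ultimately show False unfolding triv_ext_def by auto
qed



lemma tm_one: "c \<in> zvec n \<Longrightarrow> tm p (\<lambda>_. 1) c = (\<lambda>i. c (p i))"
  unfolding tm_def using zvec_mod by (simp add: fun_eq_iff)

lemma perm_exists:
  assumes S: "S \<subseteq> {..<m}"
  shows "\<exists>p. p permutes {..<Suc m} \<and> p m = m \<and> bij_betw p {..<card S} S"
proof -
  let ?w = "card S"
  have fin: "finite S" using S finite_subset by blast
  have wm: "?w \<le> m" using card_mono[OF _ S] by simp
  obtain h1 where h1: "bij_betw h1 {..<?w} S"
    using finite_same_card_bij[of "{..<?w}" S] fin by auto
  have c2: "card {?w..<m} = card ({..<m} - S)"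
    using S fin by (simp add: card_Diff_subset)
  obtain h2 where h2: "bij_betw h2 {?w..<m} ({..<m} - S)"
    using finite_same_card_bij[OF _ _ c2] by auto
  define p where "p x = (if x < ?w then h1 x else if x < m then h2 x else x)" for x
  have b1: "bij_betw p {..<?w} S"
    using h1 by (rule bij_betw_cong[THEN iffD1, rotated]) (simp add: p_def)
  have b2: "bij_betw p {?w..<m} ({..<m} - S)"
    using h2 by (rule bij_betw_cong[THEN iffD1, rotated]) (simp add: p_def)
  have "bij_betw p ({..<?w} \<union> {?w..<m}) (S \<union> ({..<m} - S))"
    by (rule bij_betw_combine[OF b1 b2]) blast
  moreover have "{..<?w} \<union> {?w..<m} = {..<m}" using wm by auto
  moreover have "S \<union> ({..<m} - S) = {..<m}" using S by auto
  ultimately have "bij_betw p {..<m} {..<m}" by simp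
  moreover have "p x = x" if "x \<notin> {..<m}" for x using that wm by (simp add: p_def)
  ultimately have "p permutes {..<m}" by (rule bij_imp_permutes)
  then have "p permutes {..<Suc m}" by (rule permutes_subset) auto
  moreover have "p m = m" using wm by (simp add: p_def)
  ultimately show ?thesis using b1 by blast
qed

lemma GS_perm:
  assumes S: "S \<subseteq> {..<m}"
  shows "z4equiv (Suc m) (GS m S) (GS m {..<card S})"
proof -
  let ?w = "card S"
  obtain p where p: "p permutes {..<Suc m}" "p m = m" "bij_betw p {..<?w} S"
    using perm_exists[OF S] by blast
  have ip: "inv p (p x) = x" "p (inv p x) = x" for x using p(1) permutes_inverses by fastforce+
  have ipm: "inv p m = m" using ip p(2) by metis
  have "GS m {..<?w} = tm p (\<lambda>_. 1) ` GS m S"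
  proof (intro set_eqI iffI)
    fix d assume d: "d \<in> GS m {..<?w}"
    then have dz: "d \<in> zvec (Suc m)" and dpar: "(d m + (\<Sum>i<?w. d i)) mod 2 = 0"
      unfolding GS_def by auto
    let ?c = "tm (inv p) (\<lambda>_. 1) d"
    have pinv: "inv p permutes {..<Suc m}" using p(1) by (rule permutes_inv)
    have cz: "?c \<in> zvec (Suc m)" using tm_zvec[OF dz pinv] .
    have cf: "?c = (\<lambda>i. d (inv p i))" using tm_one[OF dz] .
    have "(\<Sum>i\<in>S. d (inv p i)) = (\<Sum>i<?w. d (inv p (p i)))"
      using sum.reindex_bij_betw[OF p(3), of "\<lambda>i. d (inv p i)"] by simp
    also have "\<dots> = (\<Sum>i<?w. d i)" using ip by simp
    finally have "?c \<in> GS m S" unfolding GS_def using cz dpar ipm cf by simp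
    moreover have "tm p (\<lambda>_. 1) ?c = d"
    proof -
      have "tm p (\<lambda>_. 1) ?c = (\<lambda>i. ?c (p i))" by (rule tm_one[OF cz])
      also have "\<dots> = (\<lambda>i. d (inv p (p i)))" by (subst cf) simp
      also have "\<dots> = d" using ip by simp
      finally show ?thesis .
    qed
    ultimately show "d \<in> tm p (\<lambda>_. 1) ` GS m S" by (metis image_eqI)
  next
    fix d assume "d \<in> tm p (\<lambda>_. 1) ` GS m S"
    then obtain c where c: "c \<in> GS m S" "d = tm p (\<lambda>_. 1) c" by blast
    then have cz: "c \<in> zvec (Suc m)" and cpar: "(c m + (\<Sum>i\<in>S. c i)) mod 2 = 0"
      unfolding GS_def by auto
    have df: "d = (\<lambda>i. c (p i))" using c(2) tm_one[OF cz] by simp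
    have dz: "d \<in> zvec (Suc m)" using c(2) tm_zvec[OF cz p(1)] by simp
    have "(\<Sum>i<?w. d i) = (\<Sum>i\<in>S. c i)"
      unfolding df using sum.reindex_bij_betw[OF p(3), of c] by simp
    then show "d \<in> GS m {..<?w}" unfolding GS_def using dz cpar df p(2) by simp
  qed
  moreover have "\<forall>i. (\<lambda>_. 1::int) i = 1 \<or> (\<lambda>_. 1::int) i = -1" by simp
  ultimately show ?thesis unfolding z4equiv_tm using p(1)
    by (intro exI[of _ p] exI[of _ "\<lambda>_. 1::int"] conjI) auto
qed

definition rr :: "nat \<Rightarrow> nat \<Rightarrow> nat \<Rightarrow> nat \<Rightarrow> int" where
  "rr m w i j = (if j < m then (if i = j then 1 else 0) else if j = m then (if i < w then 1 else 0) else 0)"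
definition ss :: "nat \<Rightarrow> nat \<Rightarrow> nat \<Rightarrow> int" where
  "ss m i j = (if j = m then 2 else 0)"

lemma rr_std: "std_form (Suc m) m 1 (rr m w) (ss m)"
  unfolding std_form_def rr_def ss_def by auto

lemma S0_rr: "w \<le> m \<Longrightarrow> S0 m (rr m w) = {..<w}"
  unfolding S0_def rr_def by auto

lemma GS_gen: "w \<le> m \<Longrightarrow> gen_code m 1 (rr m w) (ss m) = GS m {..<w}"
  using gen_code_GS[OF rr_std] S0_rr by simp

lemma GS_z4code: "w \<le> m \<Longrightarrow> z4code (Suc m) (GS m {..<w})"
  using GS_gen gen_code_z4code[OF rr_std] by metis

lemma GS_has_type: "w \<le> m \<Longrightarrow> has_type (Suc m) m 1 (GS m {..<w})"
  unfolding has_type_def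
  apply (rule exI[of _ id], rule exI[of _ "rr m w"], rule exI[of _ "ss m"])
  apply (intro conjI)
    apply (rule permutes_id)
   apply (rule rr_std)
  apply (subst GS_gen, assumption)
  by simp

lemma type_GS:
  assumes "z4code (Suc m) C" "has_type (Suc m) m 1 C"
  shows "\<exists>S. S \<subseteq> {..<m} \<and> z4equiv (Suc m) (GS m S) C"
proof -
  obtain \<sigma> r s where h: "\<sigma> permutes {..<Suc m}" "std_form (Suc m) m 1 r s"
     "(\<lambda>c. c \<circ> \<sigma>) ` C = gen_code m 1 r s"
    using assms(2) unfolding has_type_def by blast
  have Cz: "C \<subseteq> zvec (Suc m)" using assms(1) unfolding z4code_def by blast
  have "tm \<sigma> (\<lambda>_. 1) ` C = (\<lambda>c. c \<circ> \<sigma>) ` C"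
    using Cz tm_one by (intro image_cong) (auto simp: comp_def)
  then have "tm \<sigma> (\<lambda>_. 1) ` C = GS m (S0 m r)" using h(3) gen_code_GS[OF h(2)] by simp
  then have "z4equiv (Suc m) C (GS m (S0 m r))" unfolding z4equiv_tm using h(1)
    by (intro exI[of _ \<sigma>] exI[of _ "\<lambda>_. 1::int"] conjI) auto
  then have "z4equiv (Suc m) (GS m (S0 m r)) C" using equiv_sym Cz by blast
  then show ?thesis using S0_sub by blast
qed

lemma main_suc: "Nprime (Suc m) m 1 = Suc m"
proof -
  let ?K = "\<lambda>w. GS m {..<w}"
  let ?Q = "{cls (Suc m) C | C. z4code (Suc m) C \<and> has_type (Suc m) m 1 C \<and>
      \<not> (\<exists>D. z4code m D \<and> z4equiv (Suc m) C (triv_ext m D))}"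
  have N: "Nprime (Suc m) m 1 = card ?Q" unfolding Nprime_def cls_def by simp
  have Q: "?Q = (\<lambda>w. cls (Suc m) (?K w)) ` {..m}"
  proof (intro set_eqI iffI)
    fix X assume "X \<in> ?Q"
    then obtain C where C: "X = cls (Suc m) C" "z4code (Suc m) C" "has_type (Suc m) m 1 C" by blast
    obtain S where S: "S \<subseteq> {..<m}" "z4equiv (Suc m) (GS m S) C" using type_GS[OF C(2,3)] by blast
    let ?w = "card S"
    have wm: "?w \<le> m" using card_mono[OF _ S(1)] by simp
    have "z4equiv (Suc m) (GS m S) (?K ?w)" using GS_perm[OF S(1)] .
    then have "z4equiv (Suc m) (?K ?w) (GS m S)" using equiv_sym GS_zvec by blast
    then have "z4equiv (Suc m) (?K ?w) C" using S(2) equiv_trans by blast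
    then have "cls (Suc m) (?K ?w) = X" using cls_eq GS_zvec C(1) by blast
    then show "X \<in> (\<lambda>w. cls (Suc m) (?K w)) ` {..m}" using wm by force
  next
    fix X assume "X \<in> (\<lambda>w. cls (Suc m) (?K w)) ` {..m}"
    then obtain w where w: "w \<le> m" "X = cls (Suc m) (?K w)" by auto
    have "\<not> (\<exists>D. z4code m D \<and> z4equiv (Suc m) (?K w) (triv_ext m D))"
      using GS_nontriv[of "{..<w}" m] w(1) by auto
    then show "X \<in> ?Q" using w GS_z4code GS_has_type by blast
  qed
  have inj: "inj_on (\<lambda>w. cls (Suc m) (?K w)) {..m}"
  proof (rule inj_onI)
    fix w1 w2 assume w: "w1 \<in> {..m}" "w2 \<in> {..m}" "cls (Suc m) (?K w1) = cls (Suc m) (?K w2)"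
    have "?K w2 \<in> cls (Suc m) (?K w2)" unfolding cls_def
      using GS_z4code w(2) equiv_refl GS_zvec by auto
    then have "z4equiv (Suc m) (?K w1) (?K w2)" using w(3) unfolding cls_def by auto
    then have "card (Pinv (Suc m) (?K w2)) = card (Pinv (Suc m) (?K w1))"
      using Pinv_equiv' GS_zvec by blast
    then have "m - w2 = m - w1" using card_Pinv_GS[of "{..<w1}" m] card_Pinv_GS[of "{..<w2}" m] w by auto
    then show "w1 = w2" using w by auto
  qed
  show ?thesis unfolding N Q using card_image[OF inj] by simp
qed


theorem mainTheorem4:
  fixes n :: nat
  assumes "n \<ge> 1"
  shows "Nprime n (n - 1) 1 = n"
proof -
  obtain m where n: "n = Suc m" using assms by (cases n) auto
  show ?thesis unfolding n using main_suc by simp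
qed

end
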